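(* For each of the following groups $G$ of order $36$ there exists a $(G,[3,9,24],18)$ Hadamard partitioned difference family: $\mathbb{Z}_6\times\mathbb{Z}_6$, $\mathbb{Z}_3\times\mathbb{Z}_{12}$, $\mathbb{Z}_3\times Q_{12}$, $D_6\times D_6$, $\mathbb{Z}_6\times D_6$.
   Context: For a finite group $G$ (difference of $x$ and $y$ being $x-y$ additively, or $xy^{-1}$ multiplicatively) and $B\subseteq G$, $\Delta B$ is the multiset of differences of ordered pairs of distinct elements of $B$; for $\mathcal{F}=\{B_1,\dots,B_t\}$, $\Delta\mathcal{F}$ is the multiset union of the $\Delta B_i$. $\mathcal{F}$ is a $(G,[k_1,\dots,k_t],\lambda)$ partitioned difference family if the $B_i$ partition $G$, $|B_i|=k_i$, and $\Delta\mathcal{F}$ contains every non-identity element of $G$ exactly $\lambda$ times; it is Hadamard if $|G|=2\lambda$. $D_{2n}=\langle x,y\mid x^n=1,\ y^2=1,\ yx^i=x^{-i}y\rangle$ is the dihedral group of order $2n$ (so $D_6$ has order $6$), and $Q_{4n}=\langle x,y\mid x^{2n}=1,\ y^2=x^n,\ yx^i=x^{-i}y\rangle$ is the dicyclic group of order $4n$ (so $Q_{12}$ has order $12$). *)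

theory Defs
  imports "HOL-Algebra.Algebra" "HOL-Library.Multiset"
begin

(* Cyclic group Z_n: the library's integer_mod_group n (carrier {0..<n}, addition mod n). *)

(* Dihedral group D_{2n} = <x,y | x^n = 1, y^2 = 1, y x^i = x^{-i} y>, order 2n.
   The pair (i,s), 0 <= i < n, s in {0,1}, represents x^i y^s. *)
definition dihedral_group :: "nat \<Rightarrow> (int \<times> int) monoid" where
  "dihedral_group n =
     \<lparr>carrier = {0..<int n} \<times> {0..<2},
      monoid.mult = (\<lambda>(i,s) (j,t). ((i + (if s = 0 then j else - j)) mod int n, (s + t) mod 2)),
      one = (0, 0)\<rparr>"

(* Dicyclic group Q_{4n} = <x,y | x^{2n} = 1, y^2 = x^n, y x^i = x^{-i} y>, order 4n.
   The pair (i,s), 0 <= i < 2n, s in {0,1}, represents x^i y^s. *)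
definition dicyclic_group :: "nat \<Rightarrow> (int \<times> int) monoid" where
  "dicyclic_group n =
     \<lparr>carrier = {0..<2 * int n} \<times> {0..<2},
      monoid.mult = (\<lambda>(i,s) (j,t).
         ((i + (if s = 0 then j else - j) + (if s = 1 \<and> t = 1 then int n else 0)) mod (2 * int n),
          (s + t) mod 2)),
      one = (0, 0)\<rparr>"

definition diff_mset :: "('a, 'b) monoid_scheme \<Rightarrow> 'a set \<Rightarrow> 'a multiset" where
  "diff_mset G B =
     image_mset (\<lambda>(a, b). a \<otimes>\<^bsub>G\<^esub> inv\<^bsub>G\<^esub> b) (mset_set {(a, b). a \<in> B \<and> b \<in> B \<and> a \<noteq> b})"

definition diff_mset_family :: "('a, 'b) monoid_scheme \<Rightarrow> 'a set list \<Rightarrow> 'a multiset" where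
  "diff_mset_family G Bs = sum_list (map (diff_mset G) Bs)"

definition is_PDF :: "('a, 'b) monoid_scheme \<Rightarrow> 'a set list \<Rightarrow> nat list \<Rightarrow> nat \<Rightarrow> bool" where
  "is_PDF G Bs ks lam \<longleftrightarrow>
     length Bs = length ks \<and>
     (\<forall>i < length Bs. card (Bs ! i) = ks ! i) \<and>
     (\<forall>i < length Bs. \<forall>j < length Bs. i \<noteq> j \<longrightarrow> Bs ! i \<inter> Bs ! j = {}) \<and>
     \<Union> (set Bs) = carrier G \<and>
     (\<forall>g \<in> carrier G - {\<one>\<^bsub>G\<^esub>}. count (diff_mset_family G Bs) g = lam)"

definition is_Hadamard_PDF :: "('a, 'b) monoid_scheme \<Rightarrow> 'a set list \<Rightarrow> nat list \<Rightarrow> nat \<Rightarrow> bool" where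
  "is_Hadamard_PDF G Bs ks lam \<longleftrightarrow> is_PDF G Bs ks lam \<and> card (carrier G) = 2 * lam"

end

theory Submission
  imports Defs
begin

definition good_inv :: "('a, 'b) monoid_scheme \<Rightarrow> ('a \<Rightarrow> 'a) \<Rightarrow> bool" where
  "good_inv G f \<longleftrightarrow> (\<forall>x\<in>carrier G. f x \<in> carrier G \<and> x \<otimes>\<^bsub>G\<^esub> f x = \<one>\<^bsub>G\<^esub> \<and> f x \<otimes>\<^bsub>G\<^esub> x = \<one>\<^bsub>G\<^esub>
      \<and> (\<forall>z\<in>carrier G. x \<otimes>\<^bsub>G\<^esub> z = \<one>\<^bsub>G\<^esub> \<and> z \<otimes>\<^bsub>G\<^esub> x = \<one>\<^bsub>G\<^esub> \<longrightarrow> z = f x))"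

lemma good_inv_inv: "good_inv G f \<Longrightarrow> x \<in> carrier G \<Longrightarrow> inv\<^bsub>G\<^esub> x = f x"
  unfolding good_inv_def m_inv_def by (rule the_equality) auto

lemma good_inv_group: "group G \<Longrightarrow> good_inv G (\<lambda>x. inv\<^bsub>G\<^esub> x)"
  unfolding good_inv_def by (auto intro: group.inv_equality[symmetric] group.r_inv group.l_inv group.inv_closed)

lemma good_inv_prod: "good_inv G f \<Longrightarrow> good_inv H g \<Longrightarrow> good_inv (G \<times>\<times> H) (\<lambda>(a,b). (f a, g b))"
  unfolding good_inv_def by (auto simp: mult_DirProd')

definition dl :: "('a, 'b) monoid_scheme \<Rightarrow> ('a \<Rightarrow> 'a) \<Rightarrow> 'a list \<Rightarrow> 'a list" where
  "dl G f xs = map (\<lambda>(a,b). a \<otimes>\<^bsub>G\<^esub> f b) (filter (\<lambda>(a,b). a \<noteq> b) (List.product xs xs))"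

lemma diff_mset_dl:
  assumes gi: "good_inv G f" and d: "distinct xs" and s: "set xs \<subseteq> carrier G"
  shows "diff_mset G (set xs) = mset (dl G f xs)"
proof -
  have e: "{(a, b). a \<in> set xs \<and> b \<in> set xs \<and> a \<noteq> b} = set (filter (\<lambda>(a,b). a \<noteq> b) (List.product xs xs))"
    by auto
  have "distinct (filter (\<lambda>(a,b). a \<noteq> b) (List.product xs xs))"
    using d by (simp add: distinct_product)
  then have "mset_set {(a, b). a \<in> set xs \<and> b \<in> set xs \<and> a \<noteq> b} = mset (filter (\<lambda>(a,b). a \<noteq> b) (List.product xs xs))"
    unfolding e by (rule mset_set_set)
  then show ?thesis unfolding diff_mset_def dl_def mset_map
    using s by (auto intro!: image_mset_cong simp: good_inv_inv[OF gi])
qed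

lemma family_dl:
  assumes gi: "good_inv G f" and d: "distinct (concat xss)" and s: "set (concat xss) \<subseteq> carrier G"
  shows "diff_mset_family G (map set xss) = mset (concat (map (dl G f) xss))"
  using d s
proof (induction xss)
  case Nil
  then show ?case by (simp add: diff_mset_family_def)
next
  case (Cons xs xss)
  then show ?case by (simp add: diff_mset_family_def diff_mset_dl[OF gi])
qed

definition pdf_check :: "('a, 'b) monoid_scheme \<Rightarrow> ('a \<Rightarrow> 'a) \<Rightarrow> 'a list list \<Rightarrow> nat \<Rightarrow> bool" where
  "pdf_check G f xss lam = (let D = concat (map (dl G f) xss) in
     \<forall>g\<in>set (concat xss). g \<noteq> \<one>\<^bsub>G\<^esub> \<longrightarrow> count_list D g = lam)"

lemma PDF3:
  assumes gi: "good_inv G f" and d: "distinct (x1 @ x2 @ x3)" and s: "set (x1 @ x2 @ x3) = carrier G"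
    and l: "length x1 = k1" "length x2 = k2" "length x3 = k3" "length (x1 @ x2 @ x3) = 2 * lam"
    and c: "pdf_check G f [x1, x2, x3] lam"
  shows "is_Hadamard_PDF G [set x1, set x2, set x3] [k1, k2, k3] lam"
proof -
  have fam: "diff_mset_family G (map set [x1, x2, x3]) = mset (concat (map (dl G f) [x1, x2, x3]))"
    by (rule family_dl[OF gi]) (use d s in auto)
  have cnt: "\<forall>g\<in>carrier G - {\<one>\<^bsub>G\<^esub>}. count (diff_mset_family G [set x1, set x2, set x3]) g = lam"
    using c fam s unfolding pdf_check_def Let_def by (simp add: count_mset)
  have disj: "\<forall>i<3. \<forall>j<3. i \<noteq> j \<longrightarrow> [set x1, set x2, set x3] ! i \<inter> [set x1, set x2, set x3] ! j = {}"
    using d by (auto simp: less_Suc_eq numeral_eq_Suc)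
  have cards: "\<forall>i<3. card ([set x1, set x2, set x3] ! i) = [k1, k2, k3] ! i"
    using d l by (auto simp: less_Suc_eq numeral_eq_Suc distinct_card)
  have "card (carrier G) = 2 * lam" using s d l(4) by (metis distinct_card)
  then show ?thesis unfolding is_Hadamard_PDF_def is_PDF_def
    using disj cards cnt s by simp
qed

definition dlm :: "('a \<Rightarrow> 'a \<Rightarrow> 'a) \<Rightarrow> ('a \<Rightarrow> 'a) \<Rightarrow> 'a list \<Rightarrow> 'a list" where
  "dlm mul f xs = map (\<lambda>(a,b). mul a (f b)) (filter (\<lambda>(a,b). a \<noteq> b) (List.product xs xs))"

definition pdf_checkm :: "('a \<Rightarrow> 'a \<Rightarrow> 'a) \<Rightarrow> 'a \<Rightarrow> ('a \<Rightarrow> 'a) \<Rightarrow> 'a list list \<Rightarrow> nat \<Rightarrow> bool" where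
  "pdf_checkm mul e f xss lam = (let D = concat (map (dlm mul f) xss) in
     \<forall>g\<in>set (concat xss). g \<noteq> e \<longrightarrow> count_list D g = lam)"

lemma PDF3m:
  assumes gi: "good_inv G f" and m: "monoid.mult G = mul" and o: "\<one>\<^bsub>G\<^esub> = e"
    and d: "distinct (x1 @ x2 @ x3)" and s: "set (x1 @ x2 @ x3) = carrier G"
    and l: "length x1 = k1" "length x2 = k2" "length x3 = k3" "length (x1 @ x2 @ x3) = 2 * lam"
    and c: "pdf_checkm mul e f [x1, x2, x3] lam"
  shows "is_Hadamard_PDF G [set x1, set x2, set x3] [k1, k2, k3] lam"
proof (rule PDF3[OF gi d s l])
  have "dl G f = dlm mul f" using m by (auto simp: dl_def dlm_def fun_eq_iff)
  then show "pdf_check G f [x1, x2, x3] lam" using c o by (simp add: pdf_check_def pdf_checkm_def)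
qed

fun inc :: "'a \<Rightarrow> 'a list \<Rightarrow> nat list \<Rightarrow> nat list" where
  "inc d [] ns = ns"
| "inc d (c # cs) [] = []"
| "inc d (c # cs) (n # ns) = (if c = d then Suc n # ns else n # inc d cs ns)"

lemma inc_gen: "distinct cs \<Longrightarrow> inc d cs (map h cs) = map (\<lambda>c. if c = d then Suc (h c) else h c) cs"
  by (induction cs) auto

lemma dlm_rows: "dlm mul f xs = concat (map (\<lambda>a. map (\<lambda>b. mul a (f b)) (filter (\<lambda>b. b \<noteq> a) ys)) xs')"
  if "xs' = xs" "ys = xs" for xs'
proof -
  have "map (\<lambda>(a,b). mul a (f b)) (filter (\<lambda>(a,b). a \<noteq> b) (List.product zs ys)) =
        concat (map (\<lambda>a. map (\<lambda>b. mul a (f b)) (filter (\<lambda>b. b \<noteq> a) ys)) zs)" for zs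
    by (induction zs) (auto simp: filter_map o_def eq_commute[of _ "_::'a"] cong: filter_cong)
  then show ?thesis using that unfolding dlm_def by simp
qed

lemma foldr_concat': "foldr (\<lambda>row acc. foldr g row acc) rows z = foldr g (concat rows) z"
  by (induction rows) auto

fun pmul :: "('a \<Rightarrow> 'a \<Rightarrow> 'a) \<Rightarrow> ('b \<Rightarrow> 'b \<Rightarrow> 'b) \<Rightarrow> 'a \<times> 'b \<Rightarrow> 'a \<times> 'b \<Rightarrow> 'a \<times> 'b" where
  "pmul m1 m2 (a, b) (c, d) = (m1 a c, m2 b d)"

fun pinv :: "('a \<Rightarrow> 'a) \<Rightarrow> ('b \<Rightarrow> 'b) \<Rightarrow> 'a \<times> 'b \<Rightarrow> 'a \<times> 'b" where
  "pinv i1 i2 (a, b) = (i1 a, i2 b)"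

definition zm :: "int \<Rightarrow> int \<Rightarrow> int \<Rightarrow> int" where "zm n a b = (a + b) mod n"

definition zi :: "int \<Rightarrow> int \<Rightarrow> int" where "zi n a = (- a) mod n"

fun inc2 :: "'a \<Rightarrow> 'b \<Rightarrow> 'a list \<Rightarrow> 'b list \<Rightarrow> nat list list \<Rightarrow> nat list list" where
  "inc2 a b [] c2s m = m"
| "inc2 a b (c # cs) c2s [] = []"
| "inc2 a b (c # cs) c2s (r # rs) = (if c = a then inc b c2s r # rs else r # inc2 a b cs c2s rs)"

lemma inc2_gen:
  assumes "distinct c1s" "distinct c2s"
  shows "inc2 a b c1s c2s (map (\<lambda>x. map (h x) c2s) c1s)
       = map (\<lambda>x. map (\<lambda>y. if (x, y) = (a, b) then Suc (h x y) else h x y) c2s) c1s"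
  using assms(1) by (induction c1s) (auto simp: inc_gen[OF assms(2)])

lemma inc2_counts:
  assumes "distinct c1s" "distinct c2s"
  shows "inc2 a b c1s c2s (map (\<lambda>x. map (\<lambda>y. count_list D (x, y)) c2s) c1s)
       = map (\<lambda>x. map (\<lambda>y. count_list ((a, b) # D) (x, y)) c2s) c1s"
  unfolding inc2_gen[OF assms] by (auto intro!: map_cong)

definition cnt2 :: "'a list \<Rightarrow> 'b list \<Rightarrow> ('a \<times> 'b) list list \<Rightarrow> nat list list" where
  "cnt2 c1s c2s rows = foldr (\<lambda>row acc. foldr (\<lambda>(a, b). inc2 a b c1s c2s) row acc) rows
      (replicate (length c1s) (replicate (length c2s) 0))"

lemma foldr_cnt2:
  assumes "distinct c1s" "distinct c2s"
  shows "foldr (\<lambda>(a, b). inc2 a b c1s c2s) D (replicate (length c1s) (replicate (length c2s) 0))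
       = map (\<lambda>x. map (\<lambda>y. count_list D (x, y)) c2s) c1s"
proof (induction D)
  case Nil
  then show ?case by (simp add: map_replicate_const)
next
  case (Cons p D)
  then show ?case by (cases p) (simp add: inc2_counts[OF assms])
qed

definition pdf_check2 :: "('a \<times> 'b \<Rightarrow> 'a \<times> 'b \<Rightarrow> 'a \<times> 'b) \<Rightarrow> 'a \<times> 'b \<Rightarrow> ('a \<times> 'b \<Rightarrow> 'a \<times> 'b) \<Rightarrow> 'a list \<Rightarrow> 'b list \<Rightarrow> ('a \<times> 'b) list list \<Rightarrow> nat \<Rightarrow> bool" where
  "pdf_check2 mul e f c1s c2s xss lam = (cnt2 c1s c2s
      (concat (map (\<lambda>xs. map (\<lambda>a. map (\<lambda>b. mul a (f b)) (filter (\<lambda>b. b \<noteq> a) xs)) xs) xss))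
      = map (\<lambda>x. map (\<lambda>y. if (x, y) = e then 0 else lam) c2s) c1s)"

lemma check2_m:
  assumes d: "distinct c1s" "distinct c2s" and s: "set (concat xss) \<subseteq> set c1s \<times> set c2s"
    and c: "pdf_check2 mul e f c1s c2s xss lam"
  shows "pdf_checkm mul e f xss lam"
proof -
  let ?D = "concat (map (dlm mul f) xss)"
  have "concat (concat (map (\<lambda>xs. map (\<lambda>a. map (\<lambda>b. mul a (f b)) (filter (\<lambda>b. b \<noteq> a) xs)) xs) yss))
      = concat (map (dlm mul f) yss)" for yss
    by (induction yss) (simp_all add: dlm_rows[OF refl refl])
  then have "map (\<lambda>x. map (\<lambda>y. count_list ?D (x, y)) c2s) c1s = map (\<lambda>x. map (\<lambda>y. if (x, y) = e then 0 else lam) c2s) c1s"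
    using c unfolding pdf_check2_def cnt2_def foldr_concat' foldr_cnt2[OF d] by simp
  then have "\<forall>x\<in>set c1s. \<forall>y\<in>set c2s. count_list ?D (x, y) = (if (x, y) = e then 0 else lam)"
    by (simp add: map_eq_conv)
  then show ?thesis using s unfolding pdf_checkm_def Let_def by auto
qed

lemma good_inv_zi: "good_inv (integer_mod_group n) (zi (int n))"
proof -
  have "good_inv (integer_mod_group n) (\<lambda>x. inv\<^bsub>integer_mod_group n\<^esub> x)" by (rule good_inv_group) simp
  then show ?thesis unfolding good_inv_def zi_def by (simp add: inv_integer_mod_group cong: ball_cong)
qed

lemma good_inv_pinv: "good_inv G f \<Longrightarrow> good_inv H g \<Longrightarrow> good_inv (G \<times>\<times> H) (pinv f g)"
proof -
  assume "good_inv G f" "good_inv H g"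
  then have "good_inv (G \<times>\<times> H) (\<lambda>(a,b). (f a, g b))" by (rule good_inv_prod)
  moreover have "(\<lambda>(a,b). (f a, g b)) = pinv f g" by (auto simp: fun_eq_iff)
  ultimately show ?thesis by simp
qed

lemma mult_pmul: "monoid.mult G = m1 \<Longrightarrow> monoid.mult H = m2 \<Longrightarrow> monoid.mult (G \<times>\<times> H) = pmul m1 m2"
  by (auto simp: fun_eq_iff mult_DirProd' DirProd_def)

lemma mult_zm: "monoid.mult (integer_mod_group n) = zm (int n)"
  by (simp add: fun_eq_iff zm_def)

fun dm :: "int \<Rightarrow> int \<times> int \<Rightarrow> int \<times> int \<Rightarrow> int \<times> int" where
  "dm n (i, s) (j, t) = ((i + (if s = 0 then j else - j)) mod n, (s + t) mod 2)"

fun di :: "int \<Rightarrow> int \<times> int \<Rightarrow> int \<times> int" where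
  "di n (i, s) = (if s = 0 then ((- i) mod n, 0) else (i, 1))"

fun qm :: "int \<Rightarrow> int \<times> int \<Rightarrow> int \<times> int \<Rightarrow> int \<times> int" where
  "qm n (i, s) (j, t) = ((i + (if s = 0 then j else - j) + (if s = 1 \<and> t = 1 then n else 0)) mod (2 * n), (s + t) mod 2)"

fun qi :: "int \<Rightarrow> int \<times> int \<Rightarrow> int \<times> int" where
  "qi n (i, s) = (if s = 0 then ((- i) mod (2 * n), 0) else ((i + n) mod (2 * n), 1))"

lemma mult_dm: "monoid.mult (dihedral_group 3) = dm 3"
  by (simp add: fun_eq_iff dihedral_group_def split: prod.split cong: if_cong)

lemma mult_qm: "monoid.mult (dicyclic_group 3) = qm 3"
  by (simp add: fun_eq_iff dicyclic_group_def split: prod.split cong: if_cong)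

lemma one_dih: "one (dihedral_group 3) = (0, 0)"
  by (simp add: dihedral_group_def)

lemma one_dic: "one (dicyclic_group 3) = (0, 0)"
  by (simp add: dicyclic_group_def)

lemma carrier_dih: "carrier (dihedral_group 3) = set [(0,0),(0,1),(1,0),(1,1),(2,0),(2,1)]"
proof -
  have "{0..<(3::int)} = {0,1,2}" by auto
  moreover have "{0..<(2::int)} = {0,1}" by auto
  ultimately show ?thesis by (auto simp: dihedral_group_def)
qed

lemma carrier_dic: "carrier (dicyclic_group 3) = set [(0,0),(0,1),(1,0),(1,1),(2,0),(2,1),(3,0),(3,1),(4,0),(4,1),(5,0),(5,1)]"
proof -
  have "{0..<(6::int)} = {0,1,2,3,4,5}" by auto
  moreover have "{0..<(2::int)} = {0,1}" by auto
  ultimately show ?thesis by (auto simp: dicyclic_group_def)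
qed

lemma carrier_z3: "carrier (integer_mod_group 3) = set [0,1,2]"
proof -
  have "{0..<(3::int)} = {0,1,2}" by auto
  then show ?thesis by (simp add: carrier_integer_mod_group)
qed

lemma carrier_z6: "carrier (integer_mod_group 6) = set [0,1,2,3,4,5]"
proof -
  have "{0..<(6::int)} = {0,1,2,3,4,5}" by auto
  then show ?thesis by (simp add: carrier_integer_mod_group)
qed

lemma carrier_z12: "carrier (integer_mod_group 12) = set [0,1,2,3,4,5,6,7,8,9,10,11]"
proof -
  have "{0..<(12::int)} = {0,1,2,3,4,5,6,7,8,9,10,11}" by (simp add: set_eq_iff; presburger)
  then show ?thesis by (simp add: carrier_integer_mod_group)
qed

lemma good_inv_di: "good_inv (dihedral_group 3) (di 3)"
  unfolding good_inv_def carrier_dih mult_dm one_dih by code_simp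

lemma good_inv_qi: "good_inv (dicyclic_group 3) (qi 3)"
  unfolding good_inv_def carrier_dic mult_qm one_dic by code_simp

lemma PDF3c:
  assumes gi: "good_inv (G \<times>\<times> H) f" and m: "monoid.mult (G \<times>\<times> H) = mul" and o: "\<one>\<^bsub>G \<times>\<times> H\<^esub> = e"
    and cG: "carrier G = set c1s" and cH: "carrier H = set c2s"
    and dc: "distinct c1s" "distinct c2s"
    and d: "distinct (x1 @ x2 @ x3)" and s: "set (x1 @ x2 @ x3) \<subseteq> set c1s \<times> set c2s"
    and l: "length x1 = k1" "length x2 = k2" "length x3 = k3" "length (x1 @ x2 @ x3) = 2 * lam"
       "length (x1 @ x2 @ x3) = length c1s * length c2s"
    and c: "pdf_check2 mul e f c1s c2s [x1, x2, x3] lam"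
  shows "is_Hadamard_PDF (G \<times>\<times> H) [set x1, set x2, set x3] [k1, k2, k3] lam"
proof (rule PDF3m[OF gi m o d _ l(1-4)])
  have "card (set c1s \<times> set c2s) = length c1s * length c2s"
    using dc by (simp add: card_cartesian_product distinct_card)
  moreover have "card (set (x1 @ x2 @ x3)) = length (x1 @ x2 @ x3)"
    using d by (rule distinct_card)
  ultimately have "set (x1 @ x2 @ x3) = set c1s \<times> set c2s"
    using s l(5) by (intro card_subset_eq) auto
  then show "set (x1 @ x2 @ x3) = carrier (G \<times>\<times> H)" using cG cH by simp
  show "pdf_checkm mul e f [x1, x2, x3] lam"
    by (rule check2_m[OF dc _ c]) (use s in auto)
qed

lemma ex_z6z6: "\<exists>Bs. is_Hadamard_PDF (integer_mod_group 6 \<times>\<times> integer_mod_group 6) Bs [3, 9, 24] 18"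
proof -
  have "is_Hadamard_PDF (integer_mod_group 6 \<times>\<times> integer_mod_group 6) [set [(1, 0), (3, 4), (5, 2)], set [(0, 1), (1, 3), (2, 0), (2, 1), (2, 2), (2, 4), (3, 5), (4, 1), (5, 1)], set [(0, 0), (0, 2), (0, 3), (0, 4), (0, 5), (1, 1), (1, 2), (1, 4), (1, 5), (2, 3), (2, 5), (3, 0), (3, 1), (3, 2), (3, 3), (4, 0), (4, 2), (4, 3), (4, 4), (4, 5), (5, 0), (5, 3), (5, 4), (5, 5)]] [3, 9, 24] 18"
    apply (rule PDF3c[OF good_inv_pinv[OF good_inv_zi good_inv_zi] mult_pmul[OF mult_zm mult_zm] one_DirProd carrier_z6 carrier_z6])
    apply (simp_all add: pdf_check2_def cnt2_def zm_def zi_def one_dih one_dic)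
    done
  then show ?thesis by blast
qed

lemma ex_z3z12: "\<exists>Bs. is_Hadamard_PDF (integer_mod_group 3 \<times>\<times> integer_mod_group 12) Bs [3, 9, 24] 18"
proof -
  have "is_Hadamard_PDF (integer_mod_group 3 \<times>\<times> integer_mod_group 12) [set [(0, 2), (1, 6), (2, 10)], set [(0, 3), (0, 4), (0, 5), (0, 7), (0, 11), (1, 0), (1, 5), (2, 5), (2, 8)], set [(0, 0), (0, 1), (0, 6), (0, 8), (0, 9), (0, 10), (1, 1), (1, 2), (1, 3), (1, 4), (1, 7), (1, 8), (1, 9), (1, 10), (1, 11), (2, 0), (2, 1), (2, 2), (2, 3), (2, 4), (2, 6), (2, 7), (2, 9), (2, 11)]] [3, 9, 24] 18"
    apply (rule PDF3c[OF good_inv_pinv[OF good_inv_zi good_inv_zi] mult_pmul[OF mult_zm mult_zm] one_DirProd carrier_z3 carrier_z12])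
    apply (simp_all add: pdf_check2_def cnt2_def zm_def zi_def one_dih one_dic)
    done
  then show ?thesis by blast
qed

lemma ex_z3q12: "\<exists>Bs. is_Hadamard_PDF (integer_mod_group 3 \<times>\<times> dicyclic_group 3) Bs [3, 9, 24] 18"
proof -
  have "is_Hadamard_PDF (integer_mod_group 3 \<times>\<times> dicyclic_group 3) [set [(0, (2, 0)), (1, (0, 0)), (2, (4, 0))], set [(0, (1, 0)), (0, (1, 1)), (1, (0, 1)), (1, (1, 1)), (1, (2, 1)), (1, (3, 0)), (1, (4, 1)), (2, (1, 1)), (2, (5, 0))], set [(0, (0, 0)), (0, (0, 1)), (0, (2, 1)), (0, (3, 0)), (0, (3, 1)), (0, (4, 0)), (0, (4, 1)), (0, (5, 0)), (0, (5, 1)), (1, (1, 0)), (1, (2, 0)), (1, (3, 1)), (1, (4, 0)), (1, (5, 0)), (1, (5, 1)), (2, (0, 0)), (2, (0, 1)), (2, (1, 0)), (2, (2, 0)), (2, (2, 1)), (2, (3, 0)), (2, (3, 1)), (2, (4, 1)), (2, (5, 1))]] [3, 9, 24] 18"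
    apply (rule PDF3c[OF good_inv_pinv[OF good_inv_zi good_inv_qi] mult_pmul[OF mult_zm mult_qm] one_DirProd carrier_z3 carrier_dic])
    apply (simp_all add: pdf_check2_def cnt2_def zm_def zi_def one_dih one_dic)
    done
  then show ?thesis by blast
qed

lemma ex_d6d6: "\<exists>Bs. is_Hadamard_PDF (dihedral_group 3 \<times>\<times> dihedral_group 3) Bs [3, 9, 24] 18"
proof -
  have "is_Hadamard_PDF (dihedral_group 3 \<times>\<times> dihedral_group 3) [set [((0, 0), (0, 0)), ((1, 0), (0, 0)), ((2, 0), (0, 0))], set [((0, 0), (2, 1)), ((0, 1), (0, 1)), ((0, 1), (1, 0)), ((0, 1), (1, 1)), ((0, 1), (2, 1)), ((1, 0), (0, 1)), ((1, 1), (0, 0)), ((2, 0), (1, 1)), ((2, 1), (2, 0))], set [((0, 0), (0, 1)), ((0, 0), (1, 0)), ((0, 0), (1, 1)), ((0, 0), (2, 0)), ((0, 1), (0, 0)), ((0, 1), (2, 0)), ((1, 0), (1, 0)), ((1, 0), (1, 1)), ((1, 0), (2, 0)), ((1, 0), (2, 1)), ((1, 1), (0, 1)), ((1, 1), (1, 0)), ((1, 1), (1, 1)), ((1, 1), (2, 0)), ((1, 1), (2, 1)), ((2, 0), (0, 1)), ((2, 0), (1, 0)), ((2, 0), (2, 0)), ((2, 0), (2, 1)), ((2, 1), (0, 0)), ((2, 1), (0, 1)), ((2, 1), (1, 0)), ((2, 1), (1, 1)), ((2, 1), (2, 1))]] [3, 9, 24] 18"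
    apply (rule PDF3c[OF good_inv_pinv[OF good_inv_di good_inv_di] mult_pmul[OF mult_dm mult_dm] one_DirProd carrier_dih carrier_dih])
    apply (simp_all add: pdf_check2_def cnt2_def zm_def zi_def one_dih one_dic)
    done
  then show ?thesis by blast
qed

lemma ex_z6d6: "\<exists>Bs. is_Hadamard_PDF (integer_mod_group 6 \<times>\<times> dihedral_group 3) Bs [3, 9, 24] 18"
proof -
  have "is_Hadamard_PDF (integer_mod_group 6 \<times>\<times> dihedral_group 3) [set [(1, (1, 1)), (3, (2, 1)), (5, (0, 1))], set [(0, (0, 0)), (0, (1, 1)), (1, (0, 0)), (1, (1, 0)), (1, (2, 0)), (2, (0, 0)), (2, (0, 1)), (4, (0, 0)), (4, (2, 1))], set [(0, (0, 1)), (0, (1, 0)), (0, (2, 0)), (0, (2, 1)), (1, (0, 1)), (1, (2, 1)), (2, (1, 0)), (2, (1, 1)), (2, (2, 0)), (2, (2, 1)), (3, (0, 0)), (3, (0, 1)), (3, (1, 0)), (3, (1, 1)), (3, (2, 0)), (4, (0, 1)), (4, (1, 0)), (4, (1, 1)), (4, (2, 0)), (5, (0, 0)), (5, (1, 0)), (5, (1, 1)), (5, (2, 0)), (5, (2, 1))]] [3, 9, 24] 18"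
    apply (rule PDF3c[OF good_inv_pinv[OF good_inv_zi good_inv_di] mult_pmul[OF mult_zm mult_dm] one_DirProd carrier_z6 carrier_dih])
    apply (simp_all add: pdf_check2_def cnt2_def zm_def zi_def one_dih one_dic)
    done
  then show ?thesis by blast
qed

theorem mainTheorem11:
  shows "(\<exists>Bs. is_Hadamard_PDF (integer_mod_group 6 \<times>\<times> integer_mod_group 6) Bs [3, 9, 24] 18)
       \<and> (\<exists>Bs. is_Hadamard_PDF (integer_mod_group 3 \<times>\<times> integer_mod_group 12) Bs [3, 9, 24] 18)
       \<and> (\<exists>Bs. is_Hadamard_PDF (integer_mod_group 3 \<times>\<times> dicyclic_group 3) Bs [3, 9, 24] 18)
       \<and> (\<exists>Bs. is_Hadamard_PDF (dihedral_group 3 \<times>\<times> dihedral_group 3) Bs [3, 9, 24] 18)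
       \<and> (\<exists>Bs. is_Hadamard_PDF (integer_mod_group 6 \<times>\<times> dihedral_group 3) Bs [3, 9, 24] 18)"
  using ex_z6z6 ex_z3z12 ex_z3q12 ex_d6d6 ex_z6d6 by blast

end
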